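(* Let $n\ge 4$ and let $S_{n-3,1}$ be the tree on $n$ vertices consisting of a vertex $u$ adjacent to $n-3$ leaves and to one further vertex $w$ of degree $2$ whose other neighbor is a leaf. Then $\rho_{ABC}(S_{n-3,1})>\sqrt{n-3.5}$.
   Context: For a simple connected graph $G$ with vertex set $\{v_1,\dots,v_n\}$ and degrees $d_i$, the ABC matrix is $M(G)=(m_{ij})_{n\times n}$ with $m_{ij}=\sqrt{(d_i+d_j-2)/(d_id_j)}$ if $v_iv_j$ is an edge and $m_{ij}=0$ otherwise. The ABC spectral radius $\rho_{ABC}(G)$ is the largest eigenvalue of $M(G)$. *)

theory Defs
  imports "Jordan_Normal_Form.Char_Poly"
begin

text \<open>Simple graphs on vertex set {0..<n}, given by a symmetric irreflexive edge relation E.\<close>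

definition deg :: "nat \<Rightarrow> (nat \<Rightarrow> nat \<Rightarrow> bool) \<Rightarrow> nat \<Rightarrow> nat" where
  "deg n E i = card {j. j < n \<and> E i j}"

definition abc_matrix :: "nat \<Rightarrow> (nat \<Rightarrow> nat \<Rightarrow> bool) \<Rightarrow> real mat" where
  "abc_matrix n E = mat n n (\<lambda>(i, j).
     if E i j then sqrt ((real (deg n E i) + real (deg n E j) - 2) / (real (deg n E i) * real (deg n E j)))
     else 0)"

definition abc_spectral_radius :: "nat \<Rightarrow> (nat \<Rightarrow> nat \<Rightarrow> bool) \<Rightarrow> real" where
  "abc_spectral_radius n E = Max {r. eigenvalue (abc_matrix n E) r}"

text \<open>The tree S_{n-3,1}: vertex 0 = u, vertex 1 = w, vertex 2 = the leaf adjacent to w,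
  vertices 3..n-1 are the n-3 leaves adjacent to u.\<close>
definition S_tree_edge :: "nat \<Rightarrow> nat \<Rightarrow> nat \<Rightarrow> bool" where
  "S_tree_edge n i j = (i < n \<and> j < n \<and>
     ({i, j} = {0, 1} \<or> {i, j} = {1, 2} \<or> (\<exists>k. 3 \<le> k \<and> k < n \<and> {i, j} = {0, k})))"

end

theory Submission
  imports Defs
begin

lemma fin_eig:
  fixes A :: "real mat"
  assumes A: "A \<in> carrier_mat n n"
  shows "finite {r. eigenvalue A r}"
proof -
  have "char_poly A \<noteq> 0" using degree_monic_char_poly[OF A] by auto
  then have "finite {r. poly (char_poly A) r = 0}" by (rule poly_roots_finite)
  then show ?thesis using eigenvalue_root_char_poly[OF A] by simp
qed

lemma S_edge:
  "S_tree_edge n i j = (i < n \<and> j < n \<and> ((i=0 \<and> j=1) \<or> (i=1 \<and> j=0) \<or> (i=1 \<and> j=2) \<or> (i=2 \<and> j=1)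
     \<or> (i=0 \<and> 3 \<le> j) \<or> (j=0 \<and> 3 \<le> i)))"
  unfolding S_tree_edge_def by (auto simp: doubleton_eq_iff)

lemma deg0: assumes "n \<ge> 4" shows "deg n (S_tree_edge n) 0 = n - 2"
proof -
  have "{j. j < n \<and> S_tree_edge n 0 j} = insert 1 {3..<n}" using assms by (auto simp: S_edge)
  then show ?thesis unfolding deg_def using assms by simp
qed

lemma deg1: assumes "n \<ge> 4" shows "deg n (S_tree_edge n) 1 = 2"
proof -
  have "{j. j < n \<and> S_tree_edge n 1 j} = {0,2}" using assms by (auto simp: S_edge)
  then show ?thesis unfolding deg_def by simp
qed

lemma deg1': assumes "n \<ge> 4" shows "deg n (S_tree_edge n) (Suc 0) = 2"
  using deg1[OF assms] by simp

lemma deg2: assumes "n \<ge> 4" shows "deg n (S_tree_edge n) 2 = 1"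
proof -
  have "{j. j < n \<and> S_tree_edge n 2 j} = {1}" using assms by (auto simp: S_edge)
  then show ?thesis unfolding deg_def by simp
qed

lemma degk: assumes "n \<ge> 4" "3 \<le> k" "k < n" shows "deg n (S_tree_edge n) k = 1"
proof -
  have "{j. j < n \<and> S_tree_edge n k j} = {0}" using assms by (auto simp: S_edge)
  then show ?thesis unfolding deg_def by simp
qed

lemma sum_split3:
  fixes g :: "nat \<Rightarrow> real"
  assumes "n \<ge> 3"
  shows "sum g {0..<n} = g 0 + g 1 + g 2 + sum g {3..<n}"
proof -
  have s3: "{0..<3} = {0,1,2::nat}" by auto
  have h2: "sum g {0..<3} = g 0 + g 1 + g 2" unfolding s3 by (simp add: add.assoc)
  have "sum g {0..<n} = sum g {0..<3} + sum g {3..<n}"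
    using sum.atLeastLessThan_concat[of 0 3 n g] assms by simp
  then show ?thesis using h2 by simp
qed

lemma entries:
  assumes n: "n \<ge> 4" and ij: "i < n" "j < n"
  shows "abc_matrix n (S_tree_edge n) $$ (i,j) =
    (if (i=0 \<and> j=1) \<or> (i=1 \<and> j=0) \<or> (i=1 \<and> j=2) \<or> (i=2 \<and> j=1) then sqrt (1/2)
     else if (i=0 \<and> 3 \<le> j) \<or> (j=0 \<and> 3 \<le> i) then sqrt ((real n - 3)/(real n - 2)) else 0)"
proof -
  have n2: "real (n - 2) = real n - 2" using n by simp
  have h: "abc_matrix n (S_tree_edge n) $$ (i,j) = (if S_tree_edge n i j then
     sqrt ((real (deg n (S_tree_edge n) i) + real (deg n (S_tree_edge n) j) - 2) /
       (real (deg n (S_tree_edge n) i) * real (deg n (S_tree_edge n) j))) else 0)"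
    unfolding abc_matrix_def using ij by simp
  have q1: "(real n - 2 + 2 - 2) / ((real n - 2) * 2) = 1/2" using n by (simp add: field_simps)
  have q2: "(real n - 2 + 1 - 2) / ((real n - 2) * 1) = (real n - 3)/(real n - 2)" by simp
  have q3: "(1 + (real n - 2) - 2) / (1 * (real n - 2)) = (real n - 3)/(real n - 2)" by simp
  show ?thesis unfolding h using ij n
    apply (cases "i = 0"; cases "i = 1"; cases "i = 2"; cases "j = 0"; cases "j = 1"; cases "j = 2")
    by (auto simp: h S_edge deg0 deg1 deg1' deg2 degk n2 q1 q2 q3 mult.commute)
qed

theorem lemma3p3:
  fixes n :: nat
  assumes n: "n \<ge> 4"
  shows "abc_spectral_radius n (S_tree_edge n) > sqrt (real n - 3.5)"
proof -
  define M where "M = abc_matrix n (S_tree_edge n)"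
  have Mc: "M \<in> carrier_mat n n" unfolding M_def abc_matrix_def by simp
  define a where "a = sqrt (1/2::real)"
  define b where "b = sqrt ((real n - 3)/(real n - 2))"
  define c where "c = (real n - 3)^2 / (real n - 2)"
  define t where "t = ((1 + c) + sqrt (1 + c^2)) / 2"
  define lam where "lam = sqrt t"
  have rn: "real n \<ge> 4" using n by simp
  have a2: "a * a = 1/2" unfolding a_def by (simp add: real_sqrt_mult[symmetric])
  have b2: "b * b = (real n - 3)/(real n - 2)" unfolding b_def using rn
    by (simp add: real_sqrt_mult[symmetric])
  have c0: "c \<ge> 0" unfolding c_def using rn by simp
  have cn: "c = real n - 4 + 1/(real n - 2)" unfolding c_def using rn
    by (simp add: field_simps power2_eq_square)
  have sq: "sqrt (1 + c^2) > c"
    using real_sqrt_less_mono[of "c^2" "1 + c^2"] c0 by simp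
  have tgt: "t > real n - 3.5"
  proof -
    have p: "1/(real n - 2) > 0" using rn by simp
    have "t > (1 + c + c) / 2" unfolding t_def using sq by simp
    also have "(1 + c + c) / 2 = real n - 3.5 + 1/(real n - 2)" using cn by simp
    finally show ?thesis using p by linarith
  qed
  have t0: "t > 1/2" using tgt rn by simp
  have lam0: "lam > 0" unfolding lam_def using t0 by simp
  have lam2: "lam * lam = t" unfolding lam_def using t0 by simp
  have quad: "t * t - (1 + c) * t + c / 2 = 0"
  proof -
    have s2: "sqrt (1 + c^2) * sqrt (1 + c^2) = 1 + c^2" by (simp add: c0)
    show ?thesis unfolding t_def using s2 by (simp add: field_simps power2_eq_square)
  qed
  have cb: "(real n - 3) * (b * b) = c" unfolding b2 c_def by (simp add: power2_eq_square)
  define xu where "xu = lam * (t - 1/2)"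
  define xw where "xw = a * t"
  define x2 where "x2 = lam / 2"
  define y where "y = b * (t - 1/2)"
  define v where "v = vec n (\<lambda>i. if i=0 then xu else if i=1 then xw else if i=2 then x2 else y)"
  have vc: "v \<in> carrier_vec n" unfolding v_def by simp
  have v0: "v \<noteq> 0\<^sub>v n"
  proof
    assume "v = 0\<^sub>v n"
    then have "v $ 2 = 0" using n by simp
    then show False using lam0 n unfolding v_def x2_def by simp
  qed
  have ev: "M *\<^sub>v v = lam \<cdot>\<^sub>v v"
  proof (rule eq_vecI)
    show "dim_vec (M *\<^sub>v v) = dim_vec (lam \<cdot>\<^sub>v v)" using Mc vc by simp
    fix i assume "i < dim_vec (lam \<cdot>\<^sub>v v)"
    then have i: "i < n" using vc by simp
    have e: "(M *\<^sub>v v) $ i = sum (\<lambda>j. M $$ (i,j) * v $ j) {0..<n}"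
      using i Mc vc by (simp add: scalar_prod_def row_def)
    also have "\<dots> = M $$ (i,0) * v $ 0 + M $$ (i,1) * v $ 1 + M $$ (i,2) * v $ 2
       + sum (\<lambda>j. M $$ (i,j) * v $ j) {3..<n}"
      using sum_split3 n by simp
    finally have e2: "(M *\<^sub>v v) $ i = M $$ (i,0) * v $ 0 + M $$ (i,1) * v $ 1 + M $$ (i,2) * v $ 2
       + sum (\<lambda>j. M $$ (i,j) * v $ j) {3..<n}" .
    have vj: "\<And>j. 3 \<le> j \<Longrightarrow> j < n \<Longrightarrow> v $ j = y" unfolding v_def by simp
    have v012: "v $ 0 = xu" "v $ 1 = xw" "v $ 2 = x2" unfolding v_def using n by auto
    show "(M *\<^sub>v v) $ i = (lam \<cdot>\<^sub>v v) $ i"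
    proof (cases "i \<ge> 3")
      case True
      have "sum (\<lambda>j. M $$ (i,j) * v $ j) {3..<n} = 0"
        using True i by (intro sum.neutral) (auto simp: M_def entries n)
      then have "(M *\<^sub>v v) $ i = b * xu" using e2 True i n v012
        by (simp add: M_def entries b_def)
      moreover have "(lam \<cdot>\<^sub>v v) $ i = lam * y" using i True vj vc by simp
      ultimately show ?thesis unfolding xu_def y_def by simp
    next
      case False
      then consider "i = 0" | "i = 1" | "i = 2" by linarith
      then show ?thesis
      proof cases
        case 1
        have "sum (\<lambda>j. M $$ (i,j) * v $ j) {3..<n} = sum (\<lambda>j. b * y) {3..<n}"
          using 1 by (intro sum.cong) (auto simp: M_def entries n b_def vj)
        then have "(M *\<^sub>v v) $ i = a * xw + (real n - 3) * b * y" using e2 1 n v012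
          by (simp add: M_def entries b_def a_def of_nat_diff)
        moreover have "(lam \<cdot>\<^sub>v v) $ i = lam * xu" using i 1 v012 vc by simp
        moreover have "a * xw + (real n - 3) * b * y = lam * xu"
        proof -
          have "a * xw + (real n - 3) * b * y = (a*a) * t + ((real n - 3) * (b * b)) * (t - 1/2)"
            unfolding xw_def y_def by (simp add: algebra_simps)
          also have "\<dots> = t / 2 + c * (t - 1/2)" using a2 cb by simp
          also have "\<dots> = t * (t - 1/2)" using quad by (simp add: algebra_simps)
          also have "\<dots> = lam * xu" unfolding xu_def using lam2 by (simp add: algebra_simps)
          finally show ?thesis .
        qed
        ultimately show ?thesis by simp
      next
        case 2
        have "sum (\<lambda>j. M $$ (i,j) * v $ j) {3..<n} = 0"
          using 2 by (intro sum.neutral) (auto simp: M_def entries n)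
        then have "(M *\<^sub>v v) $ i = a * xu + a * x2" using e2 2 n v012
          by (simp add: M_def entries a_def)
        moreover have "(lam \<cdot>\<^sub>v v) $ i = lam * xw" using i 2 v012 vc by simp
        moreover have "a * xu + a * x2 = lam * xw"
          unfolding xu_def x2_def xw_def using lam2 by (simp add: algebra_simps)
        ultimately show ?thesis by simp
      next
        case 3
        have "sum (\<lambda>j. M $$ (i,j) * v $ j) {3..<n} = 0"
          using 3 by (intro sum.neutral) (auto simp: M_def entries n)
        then have "(M *\<^sub>v v) $ i = a * xw" using e2 3 n v012
          by (simp add: M_def entries a_def)
        moreover have "(lam \<cdot>\<^sub>v v) $ i = lam * x2" using i 3 v012 vc by simp
        moreover have "a * xw = lam * x2"
        proof -
          have "a * xw = (a * a) * t" unfolding xw_def by simp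
          also have "\<dots> = lam * x2" unfolding x2_def using a2 lam2 by (simp add: algebra_simps)
          finally show ?thesis .
        qed
        ultimately show ?thesis by simp
      qed
    qed
  qed
  have "eigenvalue M lam" unfolding eigenvalue_def eigenvector_def
    using vc v0 ev Mc by auto
  then have "lam \<le> abc_spectral_radius n (S_tree_edge n)"
    unfolding abc_spectral_radius_def M_def[symmetric]
    using fin_eig[OF Mc] by (intro Max_ge) auto
  moreover have "sqrt (real n - 3.5) < lam" unfolding lam_def using tgt by simp
  ultimately show ?thesis by simp
qed

end
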